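(* Let $d\ge3$ and let $C$ be a $d$-dimensional copula whose marginal $C^{1:d-1}$ is absolutely continuous. Then $\mu_C$ is singular with respect to $\lambda_d$ if and only if there exists $\Lambda\in\mathcal{B}(\mathbb{I}^{d-1})$ with $\mu_{C^{1:d-1}}(\Lambda)=1$ such that $K_C(\mathbf{x},\cdot)$ is singular with respect to $\lambda$ for every $\mathbf{x}\in\Lambda$.
   Context: $\mathbb{I}=[0,1]$; $\lambda_m$ is Lebesgue measure on $\mathbb{I}^m$, $\lambda=\lambda_1$. $\mu_C$ is the probability measure with distribution function $C$; $C^{1:d-1}(\mathbf{x})=C(\mathbf{x},1)$ with measure $\mu_{C^{1:d-1}}$. $K_C:\mathbb{I}^{d-1}\times\mathcal{B}(\mathbb{I})\to\mathbb{I}$ is (a version of) the $(d-1)$-Markov kernel of $C$, i.e. a regular conditional distribution of $Y$ given $\mathbf{X}$ where $(\mathbf{X},Y)$ has distribution function $C$. A finite measure $\vartheta$ on $\mathcal{B}(\mathbb{I}^m)$ is singular if there is $G$ with $\vartheta(G)=\vartheta(\mathbb{I}^m)$ and $\lambda_m(G)=0$. *)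

theory Defs
  imports "HOL-Analysis.Analysis" "HOL-Probability.Probability"
begin

text \<open>Points of the unit cube I^d are represented as pairs (x, y) with
  x :: real^'n (the first d-1 coordinates, d - 1 = CARD('n)) and y :: real
  (the last coordinate).\<close>

definition unit_cube :: "(real^'n) set" where
  "unit_cube = {x. \<forall>i. 0 \<le> x $ i \<and> x $ i \<le> 1}"

definition copula_measure :: "((real^'n) \<times> real) measure \<Rightarrow> bool" where
  "copula_measure M \<longleftrightarrow>
     sets M = sets borel \<and> prob_space M \<and>
     measure M (unit_cube \<times> {0..1}) = 1 \<and>
     (\<forall>i. \<forall>t\<in>{0..1}. measure M {z. fst z $ i \<le> t} = t) \<and>
     (\<forall>t\<in>{0..1}. measure M {z. snd z \<le> t} = t)"

definition is_dist_fun_of :: "((real^'n) \<Rightarrow> real \<Rightarrow> real) \<Rightarrow> ((real^'n) \<times> real) measure \<Rightarrow> bool" where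
  "is_dist_fun_of C M \<longleftrightarrow>
     (\<forall>x\<in>unit_cube. \<forall>y\<in>{0..1}. C x y = measure M ({..x} \<times> {..y}))"

definition marg :: "((real^'n) \<times> real) measure \<Rightarrow> (real^'n) measure" where
  "marg M = distr M borel fst"

definition markov_kernel_of :: "((real^'n) \<times> real) measure \<Rightarrow> ((real^'n) \<Rightarrow> real measure) \<Rightarrow> bool" where
  "markov_kernel_of M K \<longleftrightarrow>
     K \<in> borel \<rightarrow>\<^sub>M prob_algebra borel \<and>
     (\<forall>x\<in>unit_cube. emeasure (K x) {0..1} = 1) \<and>
     (\<forall>A\<in>sets borel. \<forall>B\<in>sets borel.
        emeasure M (A \<times> B) = (\<integral>\<^sup>+x. indicator A x * emeasure (K x) B \<partial>marg M))"

definition singular_leb :: "'a::euclidean_space measure \<Rightarrow> bool" where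
  "singular_leb \<nu> \<longleftrightarrow>
     (\<exists>G\<in>sets borel. emeasure \<nu> G = emeasure \<nu> (space \<nu>) \<and> emeasure lborel G = 0)"

end

theory Submission
  imports Defs
begin


lemma unit_cube_cbox: "unit_cube = cbox (0::real^'n) 1"
  by (auto simp: unit_cube_def mem_box_cart)

lemma unit_cube_borel[measurable]: "(unit_cube :: (real^'n) set) \<in> sets borel"
  unfolding unit_cube_cbox by simp

lemma times_borel:
  assumes "(a::'a::second_countable_topology set) \<in> sets borel" "(b::'b::second_countable_topology set) \<in> sets borel"
  shows "a \<times> b \<in> sets borel"
  using pair_measureI[OF assms] by (subst (asm) borel_prod)

lemma sets_borel_prod: "sets (borel \<Otimes>\<^sub>M borel) = sets (borel::('a::second_countable_topology \<times> 'b::second_countable_topology) measure)"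
  by (subst borel_prod) rule

lemma fst_borel: "fst \<in> (borel :: ('a::second_countable_topology \<times> 'b::second_countable_topology) measure) \<rightarrow>\<^sub>M borel"
  using measurable_fst[of "borel::'a measure" "borel::'b measure"] by (subst (asm) borel_prod)

lemma kern_facts:
  assumes "markov_kernel_of M K"
  shows "sets (K x) = sets borel" "prob_space (K x)" "space (K x) = UNIV"
    "K \<in> borel \<rightarrow>\<^sub>M subprob_algebra borel"
proof -
  have Kp: "K \<in> borel \<rightarrow>\<^sub>M prob_algebra borel" using assms by (simp add: markov_kernel_of_def)
  have "K x \<in> space (prob_algebra borel)" using measurable_space[OF Kp] by simp
  then show s: "sets (K x) = sets borel" and "prob_space (K x)" by (auto simp: space_prob_algebra)
  show "space (K x) = UNIV" using sets_eq_imp_space_eq[OF s] by simp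
  show "K \<in> borel \<rightarrow>\<^sub>M subprob_algebra borel" using measurable_prob_algebraD[OF Kp] .
qed

lemma disint:
  fixes M :: "((real^'n) \<times> real) measure" and K :: "(real^'n) \<Rightarrow> real measure"
  assumes sM: "sets M = sets borel" and pM: "prob_space M"
    and kern: "markov_kernel_of M K"
    and E: "E \<in> sets borel"
  shows "emeasure M E = (\<integral>\<^sup>+x. emeasure (K x) (Pair x -` E) \<partial>marg M)"
proof -
  have Kp: "K \<in> borel \<rightarrow>\<^sub>M prob_algebra borel" using kern by (simp add: markov_kernel_of_def)
  have Ks: "K \<in> borel \<rightarrow>\<^sub>M subprob_algebra borel" using measurable_prob_algebraD[OF Kp] .
  have rect: "\<And>A B. A \<in> sets borel \<Longrightarrow> B \<in> sets borel \<Longrightarrow>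
     emeasure M (A \<times> B) = (\<integral>\<^sup>+x. indicator A x * emeasure (K x) B \<partial>marg M)"
    using kern by (simp add: markov_kernel_of_def)
  let ?L = "\<lambda>x. distr (K x) (borel :: ((real^'n) \<times> real) measure) (Pair x)"
  have Lm: "?L \<in> borel \<rightarrow>\<^sub>M subprob_algebra borel"
  proof (rule measurable_distr2[OF _ Ks])
    show "(\<lambda>(x, y). (x, y)) \<in> borel \<Otimes>\<^sub>M borel \<rightarrow>\<^sub>M (borel :: ((real^'n) \<times> real) measure)"
      by (simp add: borel_prod)
  qed
  have mm: "marg M = distr M borel fst" by (simp add: marg_def)
  have spm: "space (marg M) = UNIV" by (simp add: marg_def)
  have Lm': "?L \<in> marg M \<rightarrow>\<^sub>M subprob_algebra borel"
    using Lm by (simp add: marg_def)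
  define N where "N = marg M \<bind> ?L"
  have sN: "sets N = sets borel"
    unfolding N_def by (rule sets_bind) (simp_all add: spm)
  have eN: "emeasure N X = (\<integral>\<^sup>+x. emeasure (K x) (Pair x -` X) \<partial>marg M)" if X: "X \<in> sets borel" for X
  proof -
    have "emeasure N X = (\<integral>\<^sup>+x. emeasure (?L x) X \<partial>marg M)"
      unfolding N_def by (rule emeasure_bind[OF _ Lm' X]) (simp add: spm)
    also have "\<dots> = (\<integral>\<^sup>+x. emeasure (K x) (Pair x -` X) \<partial>marg M)"
    proof (rule nn_integral_cong)
      fix x
      have sK: "sets (K x) = sets borel" using kern_facts[OF kern] by simp
      have "space (K x) = UNIV" using kern_facts[OF kern] by simp
      moreover have "Pair x \<in> K x \<rightarrow>\<^sub>M borel"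
        using sK by (simp add: measurable_cong_sets[OF sK refl])
      ultimately show "emeasure (?L x) X = emeasure (K x) (Pair x -` X)"
        by (simp add: emeasure_distr X)
    qed
    finally show ?thesis .
  qed
  have "M = N"
  proof (rule measure_eqI_generator_eq[where E="{a \<times> b | a b. a \<in> sets borel \<and> b \<in> sets borel}"
        and \<Omega>=UNIV and A="\<lambda>_. UNIV"])
    show "Int_stable {a \<times> b | a b. a \<in> sets (borel::(real^'n) measure) \<and> b \<in> sets (borel::real measure)}"
      using Int_stable_pair_measure_generator[of "borel::(real^'n) measure" "borel::real measure"] by simp
    show "{a \<times> b | a b. a \<in> sets (borel::(real^'n) measure) \<and> b \<in> sets (borel::real measure)} \<subseteq> Pow UNIV" by simp
    have ss: "sets (borel::((real^'n) \<times> real) measure) = sigma_sets UNIV {a \<times> b | a b. a \<in> sets (borel::(real^'n) measure) \<and> b \<in> sets (borel::real measure)}"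
      using sets_pair_measure[of "borel::(real^'n) measure" "borel::real measure"] borel_prod[where 'a="real^'n" and 'b=real] by (simp only: space_borel UNIV_Times_UNIV)
    show "sets M = sigma_sets UNIV {a \<times> b | a b. a \<in> sets (borel::(real^'n) measure) \<and> b \<in> sets (borel::real measure)}"
      using sM ss by simp
    show "sets N = sigma_sets UNIV {a \<times> b | a b. a \<in> sets (borel::(real^'n) measure) \<and> b \<in> sets (borel::real measure)}"
      using sN ss by simp
    show "range (\<lambda>_. UNIV) \<subseteq> {a \<times> b | a b. a \<in> sets (borel::(real^'n) measure) \<and> b \<in> sets (borel::real measure)}"
      by (auto intro!: exI[of _ UNIV])
    show "(\<Union>i. UNIV) = UNIV" by simp
    show "emeasure M UNIV \<noteq> \<infinity>" using prob_space.emeasure_space_1[OF pM] sets_eq_imp_space_eq[OF sM] by simp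
    fix X assume "X \<in> {a \<times> b | a b. a \<in> sets (borel::(real^'n) measure) \<and> b \<in> sets (borel::real measure)}"
    then obtain a b where X: "X = a \<times> b" "a \<in> sets borel" "b \<in> sets borel" by auto
    have "emeasure N X = (\<integral>\<^sup>+x. emeasure (K x) (Pair x -` X) \<partial>marg M)"
      using X by (intro eN) (simp add: times_borel)
    also have "\<dots> = (\<integral>\<^sup>+x. indicator a x * emeasure (K x) b \<partial>marg M)"
      using X by (intro nn_integral_cong) (simp add: indicator_def)
    finally show "emeasure M X = emeasure N X" using rect X by simp
  qed
  then show ?thesis using eN E by simp
qed


lemma lborel_sec:
  fixes G :: "((real^'n) \<times> real) set"
  assumes G: "G \<in> sets borel"
  shows "emeasure lborel G = (\<integral>\<^sup>+x. emeasure lborel (Pair x -` G) \<partial>(lborel :: (real^'n) measure))"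
    and "(\<lambda>x. emeasure lborel (Pair x -` G)) \<in> borel_measurable (lborel :: (real^'n) measure)"
proof -
  have G': "G \<in> sets ((lborel :: (real^'n) measure) \<Otimes>\<^sub>M (lborel :: real measure))"
    using G by (subst lborel_prod) simp
  show "emeasure lborel G = (\<integral>\<^sup>+x. emeasure lborel (Pair x -` G) \<partial>(lborel :: (real^'n) measure))"
    using lborel.emeasure_pair_measure_alt[OF G'] by (simp add: lborel_prod)
  show "(\<lambda>x. emeasure lborel (Pair x -` G)) \<in> borel_measurable (lborel :: (real^'n) measure)"
    using lborel.measurable_emeasure_Pair[OF G'] .
qed

lemma sec_borel:
  fixes G :: "('a::second_countable_topology \<times> 'b::second_countable_topology) set"
  assumes "G \<in> sets borel" shows "Pair x -` G \<in> sets borel"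
proof -
  have "G \<in> sets (borel \<Otimes>\<^sub>M borel)" using assms by (subst borel_prod)
  from sets_Pair1[OF this] show ?thesis by simp
qed

lemma forward:
  fixes M :: "((real^'n) \<times> real) measure" and K :: "(real^'n) \<Rightarrow> real measure"
  assumes sM: "sets M = sets borel" and pM: "prob_space M"
    and kern: "markov_kernel_of M K"
    and ac: "absolutely_continuous lborel (marg M)"
    and cube: "measure M (unit_cube \<times> {0..1}) = 1"
    and sing: "singular_leb M"
  shows "\<exists>\<Lambda>\<in>sets borel. \<Lambda> \<subseteq> unit_cube \<and> measure (marg M) \<Lambda> = 1 \<and>
        (\<forall>x\<in>\<Lambda>. singular_leb (K x))"
proof -
  have spM: "space M = UNIV" using sets_eq_imp_space_eq[OF sM] by simp
  have M1: "emeasure M UNIV = 1" using prob_space.emeasure_space_1[OF pM] spM by simp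
  obtain G where G: "G \<in> sets borel" "emeasure M G = emeasure M (space M)" "emeasure lborel G = 0"
    using sing unfolding singular_leb_def by blast
  have MG: "emeasure M G = 1" using G M1 spM by simp
  have pmarg: "prob_space (marg M)" unfolding marg_def
    by (rule prob_space.prob_space_distr[OF pM]) (simp add: measurable_cong_sets[OF sM refl] fst_borel)
  have smarg: "sets (marg M) = sets borel" by (simp add: marg_def)
  have spmarg: "space (marg M) = UNIV" by (simp add: marg_def)
  have Km: "K \<in> borel \<rightarrow>\<^sub>M subprob_algebra borel" using kern_facts[OF kern] by simp
  have AE1: "AE x in lborel. emeasure lborel (Pair x -` G) = 0"
    using lborel_sec[OF G(1)] G(3) by (simp add: nn_integral_0_iff_AE)
  have AE2: "AE x in marg M. emeasure lborel (Pair x -` G) = 0"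
    by (rule absolutely_continuous_AE[OF _ ac AE1]) (simp add: smarg)
  have km: "(\<lambda>x. emeasure (K x) (Pair x -` G)) \<in> borel_measurable (marg M)"
  proof -
    have "(SIGMA x:space borel. Pair x -` G) \<in> sets (borel \<Otimes>\<^sub>M borel)"
    proof -
      have "(SIGMA x:space borel. Pair x -` G) = G" by auto
      then show ?thesis using G(1) by (simp add: sets_borel_prod)
    qed
    from emeasure_measurable_subprob_algebra2[OF this Km]
    show ?thesis by (simp add: marg_def)
  qed
  have int1: "(\<integral>\<^sup>+x. emeasure (K x) (Pair x -` G) \<partial>marg M) = 1"
    using disint[OF sM pM kern G(1)] MG by simp
  have le1: "emeasure (K x) A \<le> 1" for x A
    using prob_space.emeasure_le_1[OF kern_facts(2)[OF kern]] .
  have "(\<integral>\<^sup>+x. 1 - emeasure (K x) (Pair x -` G) \<partial>marg M) =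
        (\<integral>\<^sup>+x. 1 \<partial>marg M) - (\<integral>\<^sup>+x. emeasure (K x) (Pair x -` G) \<partial>marg M)"
    by (rule nn_integral_diff) (auto simp: km int1 le1)
  also have "\<dots> = 0" using int1 prob_space.emeasure_space_1[OF pmarg] by simp
  finally have "AE x in marg M. 1 - emeasure (K x) (Pair x -` G) = 0"
    by (subst (asm) nn_integral_0_iff_AE) (use km in measurable)
  then have AE3: "AE x in marg M. emeasure (K x) (Pair x -` G) = 1"
    by eventually_elim (metis le1 antisym ennreal_minus_eq_0)
  from AE2 AE3 have "AE x in marg M. emeasure lborel (Pair x -` G) = 0 \<and> emeasure (K x) (Pair x -` G) = 1"
    by eventually_elim simp
  then obtain N where N: "{x \<in> space (marg M). \<not> (emeasure lborel (Pair x -` G) = 0 \<and> emeasure (K x) (Pair x -` G) = 1)} \<subseteq> N"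
    "emeasure (marg M) N = 0" "N \<in> sets (marg M)"
    by (rule AE_E)
  define \<Lambda> where "\<Lambda> = unit_cube - N"
  have Nb: "N \<in> sets borel" using N(3) smarg by simp
  have Lb: "\<Lambda> \<in> sets borel" unfolding \<Lambda>_def using Nb by simp
  have "emeasure (marg M) unit_cube = emeasure M (unit_cube \<times> UNIV)"
    unfolding marg_def by (subst emeasure_distr) (auto simp: measurable_cong_sets[OF sM refl] spM vimage_def fst_borel intro!: arg_cong[where f="emeasure M"])
  also have "\<dots> \<ge> emeasure M (unit_cube \<times> {0..1})"
    by (rule emeasure_mono) (auto simp: sM times_borel)
  finally have "emeasure (marg M) unit_cube \<ge> 1"
    using cube finite_measure.emeasure_eq_measure[OF prob_space.finite_measure[OF pM]] by simp
  then have cu1: "emeasure (marg M) unit_cube = 1"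
    using prob_space.emeasure_le_1[OF pmarg] by (metis antisym)
  have "emeasure (marg M) \<Lambda> = 1"
  proof -
    have "\<Lambda> = unit_cube - (unit_cube \<inter> N)" unfolding \<Lambda>_def by auto
    then have "emeasure (marg M) \<Lambda> = emeasure (marg M) unit_cube - emeasure (marg M) (unit_cube \<inter> N)"
      using Nb by (simp only:) (rule emeasure_Diff, auto simp: smarg finite_measure.emeasure_finite[OF prob_space.finite_measure[OF pmarg]])
    also have "emeasure (marg M) (unit_cube \<inter> N) = 0"
      by (rule emeasure_eq_0[OF N(3) N(2) Int_lower2])
    finally show ?thesis using cu1 by simp
  qed
  then have mL: "measure (marg M) \<Lambda> = 1"
    using finite_measure.emeasure_eq_measure[OF prob_space.finite_measure[OF pmarg]] by simp
  have "singular_leb (K x)" if x: "x \<in> \<Lambda>" for x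
  proof -
    have "x \<notin> N" using x unfolding \<Lambda>_def by simp
    then have g: "emeasure lborel (Pair x -` G) = 0" "emeasure (K x) (Pair x -` G) = 1"
      using N(1) spmarg by auto
    have "emeasure (K x) (space (K x)) = 1" using prob_space.emeasure_space_1[OF kern_facts(2)[OF kern]] .
    then show ?thesis unfolding singular_leb_def using g sec_borel[OF G(1)] by metis
  qed
  then show ?thesis using Lb mL unfolding \<Lambda>_def by auto
qed



lemma measure_eq_rat:
  fixes \<mu> \<nu> :: "real measure"
  assumes s1: "sets \<mu> = sets borel" and s2: "sets \<nu> = sets borel" and fin: "emeasure \<mu> UNIV \<noteq> \<infinity>"
    and eq: "\<And>q. q \<in> \<rat> \<Longrightarrow> emeasure \<mu> {q<..} = emeasure \<nu> {q<..}"
  shows "\<mu> = \<nu>"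
proof (rule measure_eqI_generator_eq_countable[where E="greaterThan ` (\<rat>::real set)" and \<Omega>=UNIV and A="greaterThan ` (\<rat>::real set)"])
  show "Int_stable (greaterThan ` (\<rat>::real set))"
  proof (rule Int_stableI_image)
    fix i j :: real assume "i \<in> \<rat>" "j \<in> \<rat>"
    show "\<exists>k\<in>\<rat>. {i<..} \<inter> {j<..} = {k<..}"
      using \<open>i \<in> \<rat>\<close> \<open>j \<in> \<rat>\<close> by (intro bexI[of _ "max i j"]) (auto simp: max_def)
  qed
  show "greaterThan ` (\<rat>::real set) \<subseteq> Pow UNIV" by simp
  have sb: "sets (borel::real measure) = sigma_sets UNIV (greaterThan ` (\<rat>::real set))"
  proof
    have "sets (borel::real measure) = sigma_sets UNIV (range greaterThan)"
      by (subst borel_Ioi) (simp add: sets_measure_of)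
    also have "\<dots> \<subseteq> sigma_sets UNIV (greaterThan ` (\<rat>::real set))"
    proof (rule sigma_sets_mono, safe)
      fix t :: real
      have "{t<..} = \<Union> (greaterThan ` {q\<in>\<rat>. t < q})"
      proof -
        have "x \<in> \<Union> (greaterThan ` {q\<in>\<rat>. t < q})" if "t < x" for x
        proof -
          obtain q where "q \<in> \<rat>" "t < q" "q < x" using Rats_dense_in_real[OF \<open>t < x\<close>] by auto
          then show ?thesis by auto
        qed
        then show ?thesis by auto
      qed
      also have "\<dots> \<in> sigma_sets UNIV (greaterThan ` (\<rat>::real set))"
        by (rule sigma_sets_UNION) (auto intro: countable_rat sigma_sets.Basic countable_subset[OF _ countable_rat])
      finally show "{t<..} \<in> sigma_sets UNIV (greaterThan ` (\<rat>::real set))" .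
    qed
    finally show "sets (borel::real measure) \<subseteq> sigma_sets UNIV (greaterThan ` (\<rat>::real set))" .
  next
    have "sigma_sets UNIV (greaterThan ` (\<rat>::real set)) \<subseteq> sigma_sets UNIV (range greaterThan)"
      by (rule sigma_sets_mono') auto
    also have "\<dots> = sets (borel::real measure)"
      by (subst borel_Ioi) (simp add: sets_measure_of)
    finally show "sigma_sets UNIV (greaterThan ` (\<rat>::real set)) \<subseteq> sets (borel::real measure)" .
  qed
  show "sets \<mu> = sigma_sets UNIV (greaterThan ` (\<rat>::real set))" using s1 sb by simp
  show "sets \<nu> = sigma_sets UNIV (greaterThan ` (\<rat>::real set))" using s2 sb by simp
  show "greaterThan ` (\<rat>::real set) \<subseteq> greaterThan ` (\<rat>::real set)" by simp
  show "\<Union> (greaterThan ` (\<rat>::real set)) = UNIV"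
  proof safe
    fix x :: real obtain q where "q \<in> \<rat>" "q < x" using Rats_no_bot_less by blast
    then show "x \<in> \<Union> (greaterThan ` (\<rat>::real set))" by auto
  qed auto
  show "countable (greaterThan ` (\<rat>::real set))" by (auto intro: countable_rat)
  show "emeasure \<mu> a \<noteq> \<infinity>" if "a \<in> greaterThan ` (\<rat>::real set)" for a
  proof -
    have "emeasure \<mu> a \<le> emeasure \<mu> UNIV"
      by (rule emeasure_mono) (use that s1 in auto)
    then show ?thesis using fin by (auto simp: top_unique)
  qed
  show "emeasure \<mu> X = emeasure \<nu> X" if "X \<in> greaterThan ` (\<rat>::real set)" for X
    using that eq by auto
qed


lemma kmeas:
  fixes K :: "(real^'n) \<Rightarrow> real measure"
  assumes kern: "markov_kernel_of M K" and F: "F \<in> sets borel"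
  shows "(\<lambda>x. emeasure (K x) (Pair x -` F)) \<in> borel_measurable borel"
proof -
  have "(SIGMA x:space borel. Pair x -` F) = F" by auto
  then have "(SIGMA x:space borel. Pair x -` F) \<in> sets (borel \<Otimes>\<^sub>M borel)"
    using F by (simp add: sets_borel_prod)
  from emeasure_measurable_subprob_algebra2[OF this kern_facts(4)[OF kern]]
  show ?thesis by simp
qed

lemma density_null:
  assumes u: "u \<in> borel_measurable N" and Z: "Z \<in> null_sets N"
  shows "emeasure (density N u) Z = 0"
proof -
  have "AE x in N. x \<in> Z \<longrightarrow> u x = 0"
    using AE_not_in[OF Z] by eventually_elim simp
  then have "Z \<in> null_sets (density N u)" using null_sets_density_iff[OF u] Z by auto
  then show ?thesis by auto
qed

lemma backward:
  fixes M :: "((real^'n) \<times> real) measure" and K :: "(real^'n) \<Rightarrow> real measure"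
  assumes sM: "sets M = sets borel" and pM: "prob_space M"
    and kern: "markov_kernel_of M K"
    and ac: "absolutely_continuous lborel (marg M)"
    and Lb: "\<Lambda> \<in> sets borel" and L1: "measure (marg M) \<Lambda> = 1"
    and Ls: "\<forall>x\<in>\<Lambda>. singular_leb (K x)"
  shows "singular_leb M"
proof -
  have spM: "space M = UNIV" using sets_eq_imp_space_eq[OF sM] by simp
  have M1: "emeasure M UNIV = 1" using prob_space.emeasure_space_1[OF pM] spM by simp
  have finM: "emeasure M A \<noteq> \<infinity>" for A
    using finite_measure.emeasure_finite[OF prob_space.finite_measure[OF pM]] by simp
  have pmarg: "prob_space (marg M)" unfolding marg_def
    by (rule prob_space.prob_space_distr[OF pM]) (simp add: measurable_cong_sets[OF sM refl] fst_borel)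
  have smarg: "sets (marg M) = sets borel" by (simp add: marg_def)
  \<comment> \<open>Step a: a maximal Lebesgue-null set\<close>
  define S where "S = {emeasure M G | G. G \<in> sets borel \<and> emeasure lborel G = 0}"
  have "S \<noteq> {}" unfolding S_def by (auto intro!: exI[of _ "{}"])
  then obtain f where f: "incseq f" "range f \<subseteq> S" "Sup S = (SUP i. f i)"
    using ennreal_Sup_countable_SUP by blast
  have "\<forall>i. \<exists>G. G \<in> sets borel \<and> emeasure lborel G = 0 \<and> f i = emeasure M G"
    using f(2) unfolding S_def by blast
  then obtain Gs where Gs: "\<And>i. Gs i \<in> sets borel" "\<And>i. emeasure lborel (Gs i) = 0"
    "\<And>i. f i = emeasure M (Gs i)" by metis
  define G0 where "G0 = (\<Union>i. Gs i)"
  have G0b: "G0 \<in> sets borel" unfolding G0_def using Gs(1) by blast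
  have G0n: "emeasure lborel G0 = 0" unfolding G0_def
    by (rule emeasure_UN_eq_0) (use Gs in auto)
  have "emeasure M G0 \<in> S" unfolding S_def using G0b G0n by blast
  then have le1: "emeasure M G0 \<le> Sup S" by (rule Sup_upper)
  have "f i \<le> emeasure M G0" for i
    unfolding Gs(3) G0_def by (rule emeasure_mono) (use Gs sM in auto)
  then have "Sup S \<le> emeasure M G0" unfolding f(3) by (rule SUP_least)
  with le1 have MG0: "emeasure M G0 = Sup S" by simp
  have key: "emeasure M (H - G0) = 0" if H: "H \<in> sets borel" "emeasure lborel H = 0" for H
  proof -
    have "G0 \<union> H \<in> sets borel" using H G0b by simp
    moreover have "emeasure lborel (G0 \<union> H) = 0"
    proof -
      have "emeasure lborel (G0 \<union> H) \<le> emeasure lborel G0 + emeasure lborel H"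
        by (rule emeasure_subadditive) (use G0b H in auto)
      then show ?thesis using G0n H by simp
    qed
    ultimately have "emeasure M (G0 \<union> H) \<in> S" unfolding S_def by blast
    then have "emeasure M (G0 \<union> H) \<le> emeasure M G0" using MG0 by (simp add: Sup_upper)
    moreover have "emeasure M (G0 \<union> H) = emeasure M G0 + emeasure M (H - G0)"
    proof -
      have "G0 \<union> H = G0 \<union> (H - G0)" by auto
      then show ?thesis using plus_emeasure[of G0 M "H - G0"] G0b H sM by simp
    qed
    ultimately have "emeasure M G0 + emeasure M (H - G0) \<le> emeasure M G0 + 0" by simp
    then have "emeasure M (H - G0) \<le> 0" using finM[of G0] by (simp only: ennreal_add_left_cancel_le) simp
    then show ?thesis by simp
  qed
  define E where "E = UNIV - G0"
  have Eb: "E \<in> sets borel" unfolding E_def using G0b by simp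
  define ME where "ME = density M (indicator E)"
  have sME: "sets ME = sets lborel" by (simp add: ME_def sM)
  have eME: "emeasure ME X = emeasure M (E \<inter> X)" if "X \<in> sets borel" for X
    unfolding ME_def by (rule emeasure_restricted) (use that Eb sM in auto)
  have acE: "absolutely_continuous lborel ME"
    unfolding absolutely_continuous_def
  proof
    fix H :: "((real^'n) \<times> real) set" assume H: "H \<in> null_sets lborel"
    then have Hb: "H \<in> sets borel" "emeasure lborel H = 0" by auto
    have "emeasure ME H = emeasure M (H - G0)"
      using eME[OF Hb(1)] unfolding E_def by (metis Diff_eq Int_UNIV_left inf_commute)
    also have "\<dots> = 0" using key Hb by simp
    finally show "H \<in> null_sets ME" using Hb sME by (auto intro: null_setsI)
  qed
  obtain fd where fd: "fd \<in> borel_measurable lborel" "density lborel fd = ME"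
    using sigma_finite_measure.Radon_Nikodym[OF sigma_finite_lborel acE sME] by blast
  have sml: "sets (marg M) = sets lborel" using smarg by simp
  obtain g where g: "g \<in> borel_measurable lborel" "density lborel g = marg M"
    using sigma_finite_measure.Radon_Nikodym[OF sigma_finite_lborel ac sml] by blast
  have gm[measurable]: "g \<in> borel_measurable borel" using g(1) by simp
  have fdm[measurable]: "fd \<in> borel_measurable ((lborel::(real^'n) measure) \<Otimes>\<^sub>M (lborel::real measure))"
    using fd(1) by (simp add: lborel_prod)
  define h where "h B x = g x * emeasure (K x) (Pair x -` E \<inter> B)" for B x
  define k where "k B x = (\<integral>\<^sup>+y. fd (x,y) * indicator B y \<partial>lborel)" for B x
  have hm: "h B \<in> borel_measurable lborel" if B: "B \<in> sets borel" for B
  proof -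
    have F: "E \<inter> (UNIV \<times> B) \<in> sets borel" using Eb B by (intro sets.Int times_borel) auto
    have "(\<lambda>x. emeasure (K x) (Pair x -` (E \<inter> (UNIV \<times> B)))) \<in> borel_measurable borel"
      by (rule kmeas[OF kern F])
    moreover have "Pair x -` (E \<inter> (UNIV \<times> B)) = Pair x -` E \<inter> B" for x by auto
    ultimately have "(\<lambda>x. emeasure (K x) (Pair x -` E \<inter> B)) \<in> borel_measurable borel" by simp
    then show ?thesis unfolding h_def by simp
  qed
  have km': "k B \<in> borel_measurable lborel" if B: "B \<in> sets borel" for B
  proof -
    have "(\<lambda>z. fd z * indicator B (snd z)) \<in> borel_measurable ((lborel::(real^'n) measure) \<Otimes>\<^sub>M (lborel::real measure))"
      using B by measurable
    from lborel.borel_measurable_nn_integral_fst[OF this]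
    show ?thesis unfolding k_def by simp
  qed
  have AEB: "AE x in lborel. h B x = k B x" if B: "B \<in> sets borel" for B
  proof -
    have "density lborel (h B) = density lborel (k B)"
    proof (rule measure_eqI)
      show "sets (density lborel (h B)) = sets (density lborel (k B))" by simp
      fix A assume "A \<in> sets (density lborel (h B))"
      then have A: "A \<in> sets borel" by simp
      have AB: "A \<times> B \<in> sets borel" using A B by (simp add: times_borel)
      have e1: "emeasure ME (A \<times> B) = (\<integral>\<^sup>+x. h B x * indicator A x \<partial>lborel)"
      proof -
        have "emeasure ME (A \<times> B) = emeasure M (E \<inter> (A \<times> B))" using eME[OF AB] .
        also have "\<dots> = (\<integral>\<^sup>+x. emeasure (K x) (Pair x -` (E \<inter> (A \<times> B))) \<partial>marg M)"
          by (rule disint[OF sM pM kern]) (use Eb AB in simp)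
        also have "\<dots> = (\<integral>\<^sup>+x. indicator A x * emeasure (K x) (Pair x -` E \<inter> B) \<partial>marg M)"
          by (intro nn_integral_cong) (auto simp: indicator_def)
        also have "\<dots> = (\<integral>\<^sup>+x. g x * (indicator A x * emeasure (K x) (Pair x -` E \<inter> B)) \<partial>lborel)"
        proof -
          have m: "(\<lambda>x. indicator A x * emeasure (K x) (Pair x -` E \<inter> B)) \<in> borel_measurable lborel"
          proof -
            have "(\<lambda>x. g x * emeasure (K x) (Pair x -` E \<inter> B)) \<in> borel_measurable lborel" using hm[OF B] unfolding h_def .
            have F: "E \<inter> (UNIV \<times> B) \<in> sets borel" using Eb B by (intro sets.Int times_borel) auto
            have "(\<lambda>x. emeasure (K x) (Pair x -` (E \<inter> (UNIV \<times> B)))) \<in> borel_measurable borel"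
              by (rule kmeas[OF kern F])
            moreover have "Pair x -` (E \<inter> (UNIV \<times> B)) = Pair x -` E \<inter> B" for x by auto
            ultimately have "(\<lambda>x. emeasure (K x) (Pair x -` E \<inter> B)) \<in> borel_measurable borel" by simp
            then show ?thesis using A by simp
          qed
          show ?thesis unfolding g(2)[symmetric] by (rule nn_integral_density[OF g(1) m])
        qed
        also have "\<dots> = (\<integral>\<^sup>+x. h B x * indicator A x \<partial>lborel)"
          by (simp add: h_def mult_ac)
        finally show ?thesis .
      qed
      have e2: "emeasure ME (A \<times> B) = (\<integral>\<^sup>+x. k B x * indicator A x \<partial>lborel)"
      proof -
        have "emeasure ME (A \<times> B) = (\<integral>\<^sup>+z. fd z * indicator (A \<times> B) z \<partial>lborel)"
          unfolding fd(2)[symmetric] by (rule emeasure_density[OF fd(1)]) (use AB in simp)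
        also have "\<dots> = (\<integral>\<^sup>+z. fd z * indicator (A \<times> B) z \<partial>((lborel::(real^'n) measure) \<Otimes>\<^sub>M (lborel::real measure)))"
          by (simp add: lborel_prod)
        also have "\<dots> = (\<integral>\<^sup>+x. \<integral>\<^sup>+y. fd (x, y) * indicator (A \<times> B) (x, y) \<partial>lborel \<partial>lborel)"
        proof (rule lborel.nn_integral_fst[symmetric])
          have [measurable]: "A \<times> B \<in> sets ((lborel::(real^'n) measure) \<Otimes>\<^sub>M (lborel::real measure))"
            by (rule pair_measureI) (use A B in auto)
          show "(\<lambda>z. fd z * indicator (A \<times> B) z) \<in> borel_measurable ((lborel::(real^'n) measure) \<Otimes>\<^sub>M (lborel::real measure))"
            by measurable
        qed
        also have "\<dots> = (\<integral>\<^sup>+x. (\<integral>\<^sup>+y. fd (x, y) * indicator B y \<partial>lborel) * indicator A x \<partial>lborel)"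
        proof (rule nn_integral_cong)
          fix x
          have "(\<integral>\<^sup>+y. fd (x, y) * indicator (A \<times> B) (x, y) \<partial>lborel) =
                (\<integral>\<^sup>+y. (fd (x, y) * indicator B y) * indicator A x \<partial>lborel)"
            by (intro nn_integral_cong) (simp add: indicator_def)
          also have "\<dots> = (\<integral>\<^sup>+y. fd (x, y) * indicator B y \<partial>lborel) * indicator A x"
            by (rule nn_integral_multc) (use B in measurable)
          finally show "(\<integral>\<^sup>+y. fd (x, y) * indicator (A \<times> B) (x, y) \<partial>lborel) =
                (\<integral>\<^sup>+y. fd (x, y) * indicator B y \<partial>lborel) * indicator A x" .
        qed
        finally show ?thesis unfolding k_def .
      qed
      show "emeasure (density lborel (h B)) A = emeasure (density lborel (k B)) A"
        using e1 e2 emeasure_density[OF hm[OF B], of A] emeasure_density[OF km'[OF B], of A] A by simp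
    qed
    then show ?thesis using sigma_finite_measure.density_unique_iff[OF sigma_finite_lborel hm[OF B] km'[OF B]] by simp
  qed
  define Q where "Q = insert UNIV (greaterThan ` (\<rat>::real set))"
  have cQ: "countable Q" unfolding Q_def by (auto intro: countable_rat)
  have QB: "B \<in> sets borel" if "B \<in> Q" for B using that unfolding Q_def by auto
  have AEQ: "AE x in lborel. \<forall>B\<in>Q. h B x = k B x"
    by (subst AE_ball_countable[OF cQ]) (use AEB QB in blast)
  have "integral\<^sup>N lborel g = emeasure (density lborel g) UNIV"
    by (subst emeasure_density[OF g(1)]) auto
  also have "\<dots> = 1" using prob_space.emeasure_space_1[OF pmarg] g(2) by (simp add: marg_def)
  finally have gfin: "AE x in lborel. g x \<noteq> \<infinity>"
    by (intro nn_integral_PInf_AE[OF g(1)]) simp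
  have AEz: "AE x in lborel. x \<in> \<Lambda> \<longrightarrow> h UNIV x = 0"
    using AEQ gfin
  proof eventually_elim
    case (elim x)
    show ?case
    proof
      assume xL: "x \<in> \<Lambda>"
      obtain Gx where Gx: "Gx \<in> sets borel" "emeasure (K x) Gx = emeasure (K x) (space (K x))"
        "emeasure lborel Gx = 0"
        using Ls xL unfolding singular_leb_def by blast
      have sK: "sets (K x) = sets borel" "space (K x) = UNIV" "prob_space (K x)"
        using kern_facts[OF kern] by auto
      have Ex: "Pair x -` E \<in> sets borel" by (rule sec_borel[OF Eb])
      define \<nu>1 where "\<nu>1 = density (K x) (\<lambda>y. g x * indicator (Pair x -` E) y)"
      define \<nu>2 where "\<nu>2 = density lborel (\<lambda>y. fd (x, y))"
      have m1: "(\<lambda>y. g x * indicator (Pair x -` E) y) \<in> borel_measurable (K x)"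
        using Ex by (simp add: measurable_cong_sets[OF sK(1) refl])
      have m2: "(\<lambda>y. fd (x, y)) \<in> borel_measurable lborel" by measurable
      have n1: "emeasure \<nu>1 B = h B x" if B: "B \<in> sets borel" for B
      proof -
        have "emeasure \<nu>1 B = (\<integral>\<^sup>+y. g x * indicator (Pair x -` E) y * indicator B y \<partial>K x)"
          unfolding \<nu>1_def by (rule emeasure_density[OF m1]) (use B sK in simp)
        also have "\<dots> = (\<integral>\<^sup>+y. g x * indicator (Pair x -` E \<inter> B) y \<partial>K x)"
          by (intro nn_integral_cong) (simp add: indicator_def)
        also have "\<dots> = g x * emeasure (K x) (Pair x -` E \<inter> B)"
          by (rule nn_integral_cmult_indicator) (use Ex B sK in simp)
        finally show ?thesis unfolding h_def .
      qed
      have n2: "emeasure \<nu>2 B = k B x" if B: "B \<in> sets borel" for B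
        unfolding \<nu>2_def k_def by (rule emeasure_density[OF m2]) (use B in simp)
      have hfin: "h UNIV x \<noteq> \<infinity>"
      proof -
        have "emeasure (K x) (Pair x -` E \<inter> UNIV) \<noteq> \<infinity>"
          using finite_measure.emeasure_finite[OF prob_space.finite_measure[OF sK(3)]] by simp
        then show ?thesis using elim(2) unfolding h_def by (simp add: ennreal_mult_eq_top_iff)
      qed
      have "\<nu>1 = \<nu>2"
      proof (rule measure_eq_rat)
        show "sets \<nu>1 = sets borel" unfolding \<nu>1_def using sK by simp
        show "sets \<nu>2 = sets borel" unfolding \<nu>2_def by simp
        show "emeasure \<nu>1 UNIV \<noteq> \<infinity>" using n1[of UNIV] hfin by simp
        fix q :: real assume "q \<in> \<rat>"
        then have "{q<..} \<in> Q" unfolding Q_def by auto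
        then show "emeasure \<nu>1 {q<..} = emeasure \<nu>2 {q<..}"
          using n1[of "{q<..}"] n2[of "{q<..}"] elim(1) by auto
      qed
      have Gxn: "Gx \<in> null_sets lborel" using Gx by auto
      have Kc: "emeasure (K x) (UNIV - Gx) = 0"
      proof -
        have "emeasure (K x) (space (K x) - Gx) = emeasure (K x) (space (K x)) - emeasure (K x) Gx"
          by (rule emeasure_compl) (use Gx sK finite_measure.emeasure_finite[OF prob_space.finite_measure[OF sK(3)]] in auto)
        then show ?thesis using Gx(2) sK prob_space.emeasure_space_1[OF sK(3)] by simp
      qed
      have Gcn: "UNIV - Gx \<in> null_sets (K x)" using Kc Gx sK by (auto intro!: null_setsI)
      have "h UNIV x = emeasure \<nu>2 UNIV" using n1[of UNIV] \<open>\<nu>1 = \<nu>2\<close> by simp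
      also have "\<dots> = emeasure \<nu>2 Gx + emeasure \<nu>2 (UNIV - Gx)"
        using plus_emeasure[of Gx \<nu>2 "UNIV - Gx"] Gx(1) unfolding \<nu>2_def by (simp add: Un_absorb1)
      also have "emeasure \<nu>2 Gx = 0" unfolding \<nu>2_def by (rule density_null[OF m2 Gxn])
      also have "emeasure \<nu>2 (UNIV - Gx) = emeasure \<nu>1 (UNIV - Gx)" using \<open>\<nu>1 = \<nu>2\<close> by simp
      also have "\<dots> = 0" unfolding \<nu>1_def by (rule density_null[OF m1 Gcn])
      finally show "h UNIV x = 0" by simp
    qed
  qed
  have AEL: "AE x in marg M. x \<in> \<Lambda>" using prob_space.AE_prob_1[OF pmarg L1] .
  have kE: "(\<lambda>x. emeasure (K x) (Pair x -` E)) \<in> borel_measurable borel" by (rule kmeas[OF kern Eb])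
  have "emeasure M E = (\<integral>\<^sup>+x. emeasure (K x) (Pair x -` E) \<partial>marg M)"
    by (rule disint[OF sM pM kern Eb])
  also have "\<dots> = (\<integral>\<^sup>+x. indicator \<Lambda> x * emeasure (K x) (Pair x -` E) \<partial>marg M)"
    by (rule nn_integral_cong_AE) (use AEL in \<open>eventually_elim, simp\<close>)
  also have "\<dots> = (\<integral>\<^sup>+x. g x * (indicator \<Lambda> x * emeasure (K x) (Pair x -` E)) \<partial>lborel)"
    unfolding g(2)[symmetric] by (rule nn_integral_density[OF g(1)]) (use kE Lb in simp)
  also have "\<dots> = (\<integral>\<^sup>+x. 0 \<partial>(lborel::(real^'n) measure))"
    by (rule nn_integral_cong_AE) (use AEz in \<open>eventually_elim, auto simp: h_def indicator_def\<close>)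
  finally have ME0: "emeasure M E = 0" by simp
  have "emeasure M G0 + emeasure M E = emeasure M (G0 \<union> E)"
    by (rule plus_emeasure) (use G0b Eb sM in \<open>auto simp: E_def\<close>)
  also have "G0 \<union> E = space M" using spM by (auto simp: E_def)
  finally have "emeasure M G0 = emeasure M (space M)" using ME0 by simp
  then show ?thesis unfolding singular_leb_def using G0b G0n by blast
qed


theorem lemma5p9:
  fixes C :: "(real^'n) \<Rightarrow> real \<Rightarrow> real"
    and M :: "((real^'n) \<times> real) measure"
    and K :: "(real^'n) \<Rightarrow> real measure"
  assumes d3: "CARD('n) \<ge> 2"
    and copM: "copula_measure M"
    and CM: "is_dist_fun_of C M"
    and ac: "absolutely_continuous lborel (marg M)"
    and kern: "markov_kernel_of M K"
  shows "singular_leb M \<longleftrightarrow>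
     (\<exists>\<Lambda>\<in>sets borel. \<Lambda> \<subseteq> unit_cube \<and> measure (marg M) \<Lambda> = 1 \<and>
        (\<forall>x\<in>\<Lambda>. singular_leb (K x)))"
proof -
  have sM: "sets M = sets borel" and pM: "prob_space M"
    and cube: "measure M (unit_cube \<times> {0..1}) = 1"
    using copM by (simp_all add: copula_measure_def)
  show ?thesis
  proof
    assume "singular_leb M"
    then show "\<exists>\<Lambda>\<in>sets borel. \<Lambda> \<subseteq> unit_cube \<and> measure (marg M) \<Lambda> = 1 \<and>
        (\<forall>x\<in>\<Lambda>. singular_leb (K x))"
      by (rule forward[OF sM pM kern ac cube])
  next
    assume "\<exists>\<Lambda>\<in>sets borel. \<Lambda> \<subseteq> unit_cube \<and> measure (marg M) \<Lambda> = 1 \<and>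
        (\<forall>x\<in>\<Lambda>. singular_leb (K x))"
    then obtain \<Lambda> where L: "\<Lambda> \<in> sets borel" "measure (marg M) \<Lambda> = 1" "\<forall>x\<in>\<Lambda>. singular_leb (K x)"
      by blast
    show "singular_leb M" by (rule backward[OF sM pM kern ac L])
  qed
qed

end
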